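(* Let $n\ge3$ and let $\alpha=(\alpha_1,\dots,\alpha_\ell)$ be a valid nonempty prefix with $\ell<n$. Partition $[n]\setminus\{\alpha_1,\dots,\alpha_\ell\}$ into maximal sets $P_1,\dots,P_m$ of consecutive integers and let $s_t=\sum_{p\in P_t}c_p$. Define $r_k^c$ by $\sum_{k\ge0}r_k^cx^k=\prod_{t=1}^mF_{s_t}(x)$. Then the number of ménage permutations in $S_n$ whose one-line notation begins with $\alpha$ equals $$\sum_{k=0}^{n-\ell}(-1)^k\,r_k^c\,(n-\ell-k)!.$$
   Context: A ménage permutation is $\pi\in S_n$ with $\pi(i)\ne i$ and $\pi(i)+1\not\equiv i\pmod n$ for all $i\in[n]$; it begins with prefix $\alpha$ if $\pi(k)=\alpha_k$ for $k\le\ell$; $\alpha$ is valid if some ménage permutation begins with it. For $i\notin\{\alpha_1,\dots,\alpha_\ell\}$: $c_i=0$ if $i<\ell$, $c_i=1$ if $i=\ell$ or $i=n$, $c_i=2$ if $\ell<i<n$. Fibonacci polynomials: $F_0(x)=1$, $F_1(x)=1+x$, $F_k(x)=xF_{k-2}(x)+F_{k-1}(x)$ for $k\ge2$. *)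

theory Defs
  imports "HOL-Combinatorics.Permutations" "HOL-Computational_Algebra.Polynomial"
begin

definition menage :: "nat \<Rightarrow> (nat \<Rightarrow> nat) \<Rightarrow> bool" where
  "menage n \<pi> \<longleftrightarrow> \<pi> permutes {1..n} \<and>
     (\<forall>i\<in>{1..n}. \<pi> i \<noteq> i \<and> (\<pi> i + 1) mod n \<noteq> i mod n)"

definition begins_with :: "(nat \<Rightarrow> nat) \<Rightarrow> nat list \<Rightarrow> bool" where
  "begins_with \<pi> \<alpha> \<longleftrightarrow> (\<forall>k\<in>{1..length \<alpha>}. \<pi> k = \<alpha> ! (k - 1))"

definition valid_prefix :: "nat \<Rightarrow> nat list \<Rightarrow> bool" where
  "valid_prefix n \<alpha> \<longleftrightarrow> (\<exists>\<pi>. menage n \<pi> \<and> begins_with \<pi> \<alpha>)"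

definition cwt :: "nat \<Rightarrow> nat list \<Rightarrow> nat \<Rightarrow> nat" where
  "cwt n \<alpha> i = (if i < length \<alpha> then 0
                  else if i = length \<alpha> \<or> i = n then 1 else 2)"

definition remaining :: "nat \<Rightarrow> nat list \<Rightarrow> nat set" where
  "remaining n \<alpha> = {1..n} - set \<alpha>"

definition maximal_blocks :: "nat set \<Rightarrow> nat set set" where
  "maximal_blocks R = {{a..b} | a b. a \<le> b \<and> {a..b} \<subseteq> R \<and>
                                 (a = 0 \<or> a - 1 \<notin> R) \<and> b + 1 \<notin> R}"

fun fibpoly :: "nat \<Rightarrow> int poly" where
  "fibpoly 0 = 1"
| "fibpoly (Suc 0) = [:1, 1:]"
| "fibpoly (Suc (Suc k)) = [:0, 1:] * fibpoly k + fibpoly (Suc k)"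

definition rook_poly :: "nat \<Rightarrow> nat list \<Rightarrow> int poly" where
  "rook_poly n \<alpha> = (\<Prod>P\<in>maximal_blocks (remaining n \<alpha>). fibpoly (\<Sum>p\<in>P. cwt n \<alpha> p))"

end

theory Submission
  imports Defs
begin

definition NAi :: "nat set \<Rightarrow> nat set set" where
  "NAi D = {T. T \<subseteq> D \<and> (\<forall>x\<in>T. Suc x \<notin> T)}"

definition Ipol :: "nat set \<Rightarrow> int poly" where
  "Ipol D = (\<Sum>T\<in>NAi D. monom 1 (card T))"

lemma finite_NAi: "finite D \<Longrightarrow> finite (NAi D)"
  by (rule finite_subset[of _ "Pow D"]) (auto simp: NAi_def)

lemma Ipol_empty: "Ipol {} = 1"
proof -
  have "NAi {} = {{}}" by (auto simp: NAi_def)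
  then show ?thesis by (simp add: Ipol_def one_pCons monom_0)
qed

lemma monom_Suc_mult: "monom (1::'a::comm_semiring_1) (Suc k) = [:0,1:] * monom 1 k"
  by (simp add: monom_Suc)

lemma Ipol_rec:
  assumes fin: "finite D" and M: "M \<in> D" and M1: "Suc M \<notin> D"
  shows "Ipol D = Ipol (D - {M}) + [:0,1:] * Ipol (D - {M, M - 1})"
proof -
  have split: "NAi D = NAi (D - {M}) \<union> insert M ` NAi (D - {M, M - 1})"
  proof (intro equalityI subsetI)
    fix T assume T: "T \<in> NAi D"
    show "T \<in> NAi (D - {M}) \<union> insert M ` NAi (D - {M, M - 1})"
    proof (cases "M \<in> T")
      case False then show ?thesis using T by (auto simp: NAi_def)
    next
      case True
      have "T - {M} \<in> NAi (D - {M, M - 1})"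
        using T True by (auto simp: NAi_def)
      moreover have "T = insert M (T - {M})" using True by auto
      ultimately show ?thesis by blast
    qed
  next
    fix T assume "T \<in> NAi (D - {M}) \<union> insert M ` NAi (D - {M, M - 1})"
    then show "T \<in> NAi D" using M M1
      by (auto simp: NAi_def)
  qed
  have disj: "NAi (D - {M}) \<inter> insert M ` NAi (D - {M, M - 1}) = {}"
    by (auto simp: NAi_def)
  have inj: "inj_on (insert M) (NAi (D - {M, M - 1}))"
    by (rule inj_onI) (auto simp: NAi_def)
  have f1: "finite (NAi (D - {M}))" "finite (NAi (D - {M, M - 1}))"
    using fin by (auto intro: finite_NAi)
  have "Ipol D = Ipol (D - {M}) + (\<Sum>T\<in>insert M ` NAi (D - {M, M - 1}). monom 1 (card T))"
    unfolding Ipol_def split using f1 disj by (simp add: sum.union_disjoint)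
  also have "(\<Sum>T\<in>insert M ` NAi (D - {M, M - 1}). monom (1::int) (card T))
      = (\<Sum>T\<in>NAi (D - {M, M - 1}). monom 1 (card (insert M T)))"
    by (subst sum.reindex[OF inj]) (simp add: o_def)
  also have "\<dots> = (\<Sum>T\<in>NAi (D - {M, M - 1}). [:0,1:] * monom 1 (card T))"
  proof (rule sum.cong[OF refl])
    fix T assume T: "T \<in> NAi (D - {M, M - 1})"
    then have "M \<notin> T" "finite T" using fin by (auto simp: NAi_def intro: finite_subset)
    then show "monom (1::int) (card (insert M T)) = [:0, 1:] * monom 1 (card T)"
      by (simp add: monom_Suc)
  qed
  also have "\<dots> = [:0,1:] * Ipol (D - {M, M - 1})"
    by (simp add: Ipol_def sum_distrib_left)
  finally show ?thesis .
qed

lemma Ipol_Un: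
  assumes f1: "finite D1" and f2: "finite D2" and gap: "\<And>x y. x \<in> D1 \<Longrightarrow> y \<in> D2 \<Longrightarrow> Suc x < y"
  shows "Ipol (D1 \<union> D2) = Ipol D1 * Ipol D2"
proof -
  let ?h = "\<lambda>(T1, T2). T1 \<union> (T2::nat set)"
  have disj: "D1 \<inter> D2 = {}" using gap by fastforce
  have img: "NAi (D1 \<union> D2) = ?h ` (NAi D1 \<times> NAi D2)"
  proof (intro equalityI subsetI)
    fix T assume T: "T \<in> NAi (D1 \<union> D2)"
    have "T = ?h (T \<inter> D1, T \<inter> D2)" using T by (auto simp: NAi_def)
    moreover have "(T \<inter> D1, T \<inter> D2) \<in> NAi D1 \<times> NAi D2" using T by (auto simp: NAi_def)
    ultimately show "T \<in> ?h ` (NAi D1 \<times> NAi D2)" by blast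
  next
    fix T assume "T \<in> ?h ` (NAi D1 \<times> NAi D2)"
    then obtain T1 T2 where T: "T = T1 \<union> T2" "T1 \<in> NAi D1" "T2 \<in> NAi D2" by auto
    show "T \<in> NAi (D1 \<union> D2)"
      unfolding T(1) NAi_def
    proof (intro CollectI conjI ballI)
      show "T1 \<union> T2 \<subseteq> D1 \<union> D2" using T by (auto simp: NAi_def)
    next
      fix x assume x: "x \<in> T1 \<union> T2"
      show "Suc x \<notin> T1 \<union> T2"
      proof
        assume s: "Suc x \<in> T1 \<union> T2"
        have sub: "T1 \<subseteq> D1" "T2 \<subseteq> D2" using T by (auto simp: NAi_def)
        show False
        proof (cases "x \<in> T1")
          case True
          then show ?thesis using s T sub gap[of x "Suc x"] by (auto simp: NAi_def)
        next
          case False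
          then have "x \<in> T2" using x by auto
          then show ?thesis using s T sub gap[of "Suc x" x] by (auto simp: NAi_def)
        qed
      qed
    qed
  qed
  have inj: "inj_on ?h (NAi D1 \<times> NAi D2)"
  proof (rule inj_onI, clarify)
    fix A B C E assume "A \<in> NAi D1" "B \<in> NAi D2" "C \<in> NAi D1" "E \<in> NAi D2" and eq: "A \<union> B = C \<union> E"
    then have "A = (A \<union> B) \<inter> D1" "C = (C \<union> E) \<inter> D1" "B = (A \<union> B) \<inter> D2" "E = (C \<union> E) \<inter> D2"
      using disj by (auto simp: NAi_def)
    then show "A = C \<and> B = E" using eq by metis
  qed
  have fin: "finite (NAi D1)" "finite (NAi D2)" using f1 f2 by (auto intro: finite_NAi)
  have "Ipol (D1 \<union> D2) = (\<Sum>p\<in>NAi D1 \<times> NAi D2. monom 1 (card (?h p)))"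
    unfolding Ipol_def img by (subst sum.reindex[OF inj]) (simp add: o_def)
  also have "\<dots> = (\<Sum>p\<in>NAi D1 \<times> NAi D2. monom 1 (card (fst p)) * monom 1 (card (snd p)))"
  proof (rule sum.cong[OF refl])
    fix p assume p: "p \<in> NAi D1 \<times> NAi D2"
    obtain A B where AB: "p = (A, B)" by fastforce
    have "finite A" "finite B" "A \<inter> B = {}" using p AB f1 f2 disj
      by (auto simp: NAi_def intro: finite_subset)
    then show "monom (1::int) (card (?h p)) = monom 1 (card (fst p)) * monom 1 (card (snd p))"
      using AB by (simp add: card_Un_disjoint mult_monom)
  qed
  also have "\<dots> = Ipol D1 * Ipol D2"
    unfolding Ipol_def sum_product sum.cartesian_product by (simp add: case_prod_beta)
  finally show ?thesis .
qed

lemma Ipol_convex: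
  "finite D \<Longrightarrow> (\<And>x y z. x \<in> D \<Longrightarrow> y \<in> D \<Longrightarrow> x \<le> z \<Longrightarrow> z \<le> y \<Longrightarrow> z \<in> D)
   \<Longrightarrow> Ipol D = fibpoly (card D)"
proof (induction "card D" arbitrary: D rule: less_induct)
  case less
  show ?case
  proof (cases "card D")
    case 0
    then have "D = {}" using less.prems by auto
    then show ?thesis by (simp add: Ipol_empty)
  next
    case (Suc k)
    define M where "M = Max D"
    have ne: "D \<noteq> {}" using Suc by auto
    have M: "M \<in> D" using ne less.prems M_def by auto
    have M1: "Suc M \<notin> D" using Max_ge[OF less.prems(1), of "Suc M"] M_def by fastforce
    have rec: "Ipol D = Ipol (D - {M}) + [:0,1:] * Ipol (D - {M, M - 1})"
      by (rule Ipol_rec[OF less.prems(1) M M1])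
    have cv1: "\<And>x y z. x \<in> D - {M} \<Longrightarrow> y \<in> D - {M} \<Longrightarrow> x \<le> z \<Longrightarrow> z \<le> y \<Longrightarrow> z \<in> D - {M}"
    proof -
      fix x y z assume a: "x \<in> D - {M}" "y \<in> D - {M}" "x \<le> z" "z \<le> y"
      have "z \<in> D" using a less.prems(2)[of x y z] by auto
      moreover have "y \<le> M" using a Max_ge[OF less.prems(1)] M_def by auto
      ultimately show "z \<in> D - {M}" using a by auto
    qed
    have c1: "card (D - {M}) = k" using Suc M by simp
    have I1: "Ipol (D - {M}) = fibpoly k"
    proof -
      have "card (D - {M}) < card D" using c1 Suc by simp
      from less.hyps[OF this] have "Ipol (D - {M}) = fibpoly (card (D - {M}))"
        using less.prems(1) cv1 by blast
      then show ?thesis using c1 by simp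
    qed
    show ?thesis
    proof (cases k)
      case 0
      then have "D - {M} = {}" using c1 less.prems(1) by auto
      then have e0: "D - {M, M - 1} = {}" by auto
      have e: "Ipol (D - {M, M - 1}) = 1" unfolding e0 by (rule Ipol_empty)
      show ?thesis using rec I1 e 0 Suc by (simp add: one_pCons)
    next
      case (Suc j)
      have "D - {M} \<noteq> {}"
      proof
        assume "D - {M} = {}"
        then have "card (D - {M}) = 0" by (simp only: card.empty)
        then show False using c1 Suc by simp
      qed
      then obtain x where x: "x \<in> D - {M}" by blast
      have "x \<le> M" using x M_def Max_ge[OF less.prems(1)] by auto
      then have xM: "x < M" using x by auto
      have Mm: "M - 1 \<in> D" using less.prems(2)[of x M "M - 1"] x M xM by auto
      have Mm': "M - 1 \<noteq> M" using xM by auto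
      have "D - {M, M - 1} = (D - {M}) - {M - 1}" by auto
      moreover have "M - 1 \<in> D - {M}" using Mm Mm' by auto
      ultimately have c2: "card (D - {M, M - 1}) = j" using c1 Suc less.prems(1) by simp
      have cv2: "\<And>x y z. x \<in> D - {M, M - 1} \<Longrightarrow> y \<in> D - {M, M - 1} \<Longrightarrow> x \<le> z \<Longrightarrow> z \<le> y \<Longrightarrow> z \<in> D - {M, M - 1}"
      proof -
        fix x y z assume a: "x \<in> D - {M, M - 1}" "y \<in> D - {M, M - 1}" "x \<le> z" "z \<le> y"
        have "y \<le> M" using a M_def less.prems(1) by auto
        then have "y < M - 1" using a by auto
        then show "z \<in> D - {M, M - 1}" using a less.prems(2)[of x y z] by auto
      qed
      have I2: "Ipol (D - {M, M - 1}) = fibpoly j"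
      proof -
        have "card (D - {M, M - 1}) < card D" using c2 Suc \<open>card D = Suc k\<close> by simp
        from less.hyps[OF this] have "Ipol (D - {M, M - 1}) = fibpoly (card (D - {M, M - 1}))"
          using less.prems(1) cv2 by blast
        then show ?thesis using c2 by simp
      qed
      show ?thesis using rec I1 I2 Suc \<open>card D = Suc k\<close> by simp
    qed
  qed
qed

lemma blocks_empty: "maximal_blocks {} = {}"
  by (auto simp: maximal_blocks_def)

lemma finite_blocks: "finite R \<Longrightarrow> finite (maximal_blocks R)"
  by (rule finite_subset[of _ "Pow R"]) (auto simp: maximal_blocks_def)

lemma blocks_split:
  assumes fin: "finite R" and ne: "R \<noteq> {}" and z: "0 \<notin> R"
  obtains a where "1 \<le> a" "a \<le> Max R" "{a..Max R} \<subseteq> R" "a - 1 \<notin> R"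
    "maximal_blocks R = insert {a..Max R} (maximal_blocks (R - {a..Max R}))"
    "{a..Max R} \<notin> maximal_blocks (R - {a..Max R})"
proof -
  define m where "m = Max R"
  have mR: "m \<in> R" using fin ne m_def by auto
  have mmax: "\<And>x. x \<in> R \<Longrightarrow> x \<le> m" using fin m_def by auto
  define a where "a = (LEAST a. {a..m} \<subseteq> R)"
  have aR: "{a..m} \<subseteq> R" unfolding a_def by (rule LeastI[of _ m]) (use mR in auto)
  have am: "a \<le> m" unfolding a_def by (rule Least_le) (use mR in auto)
  have a1: "1 \<le> a" using aR am z by (metis atLeastAtMost_iff le_refl not_less_eq_eq subsetD le0 One_nat_def)
  have a1R: "a - 1 \<notin> R"
  proof
    assume "a - 1 \<in> R"
    then have "{a - 1..m} \<subseteq> R" using aR a1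
      by (auto) (metis atLeastAtMost_iff diff_le_self le_antisym not_less_eq_eq Suc_pred' One_nat_def le_trans subsetD linorder_not_le)
    then have "a \<le> a - 1" unfolding a_def by (rule Least_le)
    then show False using a1 by auto
  qed
  have notin: "{a..m} \<notin> maximal_blocks (R - {a..m})"
    using am by (auto simp: maximal_blocks_def)
  have eq: "maximal_blocks R = insert {a..m} (maximal_blocks (R - {a..m}))"
  proof (intro equalityI subsetI)
    fix B assume "B \<in> maximal_blocks R"
    then obtain c d where B: "B = {c..d}" "c \<le> d" "{c..d} \<subseteq> R" "c = 0 \<or> c - 1 \<notin> R" "d + 1 \<notin> R"
      by (auto simp: maximal_blocks_def)
    have dm: "d \<le> m" using B mmax by auto
    show "B \<in> insert {a..m} (maximal_blocks (R - {a..m}))"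
    proof (cases "a \<le> d")
      case True
      have "d = m"
      proof (rule ccontr)
        assume "d \<noteq> m"
        then have "d + 1 \<in> {a..m}" using True dm by auto
        then show False using aR B by auto
      qed
      moreover have "c = a"
      proof (rule ccontr)
        assume "c \<noteq> a"
        then consider "c < a" | "a < c" by linarith
        then show False
        proof cases
          case 1
          then have "a - 1 \<in> {c..d}" using True a1 by auto
          then show ?thesis using B a1R by auto
        next
          case 2
          then have "c - 1 \<in> {a..m}" using B dm by auto
          then show ?thesis using aR B 2 by auto
        qed
      qed
      ultimately show ?thesis using B by auto
    next
      case False
      then have "{c..d} \<subseteq> R - {a..m}" using B by auto
      moreover have "c = 0 \<or> c - 1 \<notin> R - {a..m}" using B by auto
      moreover have "d + 1 \<notin> R - {a..m}" using B by auto
      ultimately show ?thesis using B by (auto simp: maximal_blocks_def)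
    qed
  next
    fix B assume B0: "B \<in> insert {a..m} (maximal_blocks (R - {a..m}))"
    show "B \<in> maximal_blocks R"
    proof (cases "B = {a..m}")
      case True
      have "m + 1 \<notin> R" using mmax by fastforce
      then show ?thesis using True am aR a1R by (auto simp: maximal_blocks_def)
    next
      case False
      then obtain c d where B: "B = {c..d}" "c \<le> d" "{c..d} \<subseteq> R - {a..m}"
          "c = 0 \<or> c - 1 \<notin> R - {a..m}" "d + 1 \<notin> R - {a..m}"
        using B0 by (auto simp: maximal_blocks_def)
      have cR: "c \<in> R" "c \<notin> {a..m}" "d \<in> R" "d \<notin> {a..m}" using B by auto
      have ca: "c < a" using cR mmax by (meson atLeastAtMost_iff not_le)
      have da: "d < a" using cR mmax by (meson atLeastAtMost_iff not_le)
      have "c = 0 \<or> c - 1 \<notin> R" using B ca by auto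
      moreover have "d + 1 \<notin> R"
      proof
        assume "d + 1 \<in> R"
        then have "d + 1 \<in> {a..m}" using B by auto
        then have "d = a - 1" using da by auto
        then show False using cR a1R by auto
      qed
      ultimately show ?thesis using B by (auto simp: maximal_blocks_def)
    qed
  qed
  show ?thesis using that a1 am aR a1R eq notin m_def by blast
qed

lemma half_cases:
  fixes t :: nat
  obtains a where "t = 2 * a" | a where "t = 2 * a + 1"
  by (metis oddE evenE)

definition Dset :: "nat \<Rightarrow> nat \<Rightarrow> nat set \<Rightarrow> nat set" where
  "Dset n l X = {t. 1 \<le> t \<and> (t + 1) div 2 \<in> X \<and> l < Suc (t div 2) \<and> Suc (t div 2) \<le> n}"

lemma Dset_Un: "Dset n l (A \<union> B) = Dset n l A \<union> Dset n l B"
  by (auto simp: Dset_def)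

lemma finite_Dset: "finite (Dset n l X)"
  by (rule finite_subset[of _ "{..2*n}"]) (auto simp: Dset_def)

lemma Dset_single:
  assumes "1 \<le> p" "p \<le> n"
  shows "Dset n l {p} = (if l < p then {2*p - 1} else {}) \<union> (if l \<le> p \<and> p < n then {2*p} else {})"
  using assms by (auto simp: Dset_def split: if_splits)

lemma card_Dset_single:
  assumes "1 \<le> p" "p \<le> n" "1 \<le> length \<alpha>" "length \<alpha> < n"
  shows "card (Dset n (length \<alpha>) {p}) = cwt n \<alpha> p"
  using assms unfolding Dset_single[OF assms(1,2)] cwt_def by auto

lemma card_Dset_interval:
  assumes "1 \<le> a" "m \<le> n" "1 \<le> length \<alpha>" "length \<alpha> < n"
  shows "card (Dset n (length \<alpha>) {a..m}) = (\<Sum>p\<in>{a..m}. cwt n \<alpha> p)"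
proof -
  have "Dset n (length \<alpha>) {a..m} = (\<Union>p\<in>{a..m}. Dset n (length \<alpha>) {p})"
    by (auto simp: Dset_def)
  also have "card \<dots> = (\<Sum>p\<in>{a..m}. card (Dset n (length \<alpha>) {p}))"
    by (rule card_UN_disjoint) (auto simp: finite_Dset, auto simp: Dset_def)
  finally have "card (Dset n (length \<alpha>) {a..m}) = (\<Sum>p\<in>{a..m}. card (Dset n (length \<alpha>) {p}))" .
  also have "\<dots> = (\<Sum>p\<in>{a..m}. cwt n \<alpha> p)"
    by (rule sum.cong[OF refl]) (use assms in \<open>auto intro: card_Dset_single\<close>)
  finally show ?thesis .
qed

lemma Dset_convex:
  assumes "x \<in> Dset n l {a..m}" "y \<in> Dset n l {a..m}" "x \<le> z" "z \<le> y"
  shows "z \<in> Dset n l {a..m}"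
proof -
  have "(x + 1) div 2 \<le> (z + 1) div 2" "(z + 1) div 2 \<le> (y + 1) div 2"
    "x div 2 \<le> z div 2" "z div 2 \<le> y div 2"
    using assms(3,4) by (auto intro: div_le_mono)
  then show ?thesis using assms by (auto simp: Dset_def)
qed

lemma Ipol_Dset:
  assumes l1: "1 \<le> length \<alpha>" and ln: "length \<alpha> < n"
  shows "finite R \<Longrightarrow> R \<subseteq> {1..n} \<Longrightarrow>
    Ipol (Dset n (length \<alpha>) R) = (\<Prod>P\<in>maximal_blocks R. fibpoly (\<Sum>p\<in>P. cwt n \<alpha> p))"
proof (induction "card R" arbitrary: R rule: less_induct)
  case less
  show ?case
  proof (cases "R = {}")
    case True
    have "Dset n (length \<alpha>) {} = {}" by (auto simp: Dset_def)
    then show ?thesis using True by (simp add: blocks_empty Ipol_empty)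
  next
    case False
    have z: "0 \<notin> R" using less.prems by auto
    obtain a where a: "1 \<le> a" "a \<le> Max R" "{a..Max R} \<subseteq> R" "a - 1 \<notin> R"
      "maximal_blocks R = insert {a..Max R} (maximal_blocks (R - {a..Max R}))"
      "{a..Max R} \<notin> maximal_blocks (R - {a..Max R})"
      using blocks_split[OF less.prems(1) False z] by blast
    define m where "m = Max R"
    define R' where "R' = R - {a..m}"
    have mn: "m \<le> n" using less.prems False m_def by auto
    have mmax: "\<And>x. x \<in> R \<Longrightarrow> x \<le> m" using less.prems(1) m_def by auto
    have RU: "R = R' \<union> {a..m}" using a m_def R'_def by auto
    have cR': "card R' < card R" unfolding R'_def
      using a m_def less.prems(1) by (intro psubset_card_mono) auto
    have IH: "Ipol (Dset n (length \<alpha>) R') = (\<Prod>P\<in>maximal_blocks R'. fibpoly (\<Sum>p\<in>P. cwt n \<alpha> p))"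
      using less.hyps[OF cR'] less.prems unfolding R'_def by auto
    have gap: "Suc x < y" if x: "x \<in> Dset n (length \<alpha>) R'" and y: "y \<in> Dset n (length \<alpha>) {a..m}" for x y
    proof -
      have cx: "(x + 1) div 2 \<in> R" "(x + 1) div 2 \<notin> {a..m}" using x by (auto simp: Dset_def R'_def)
      then have "(x + 1) div 2 < a" using mmax by (meson atLeastAtMost_iff not_le)
      moreover have "(x + 1) div 2 \<noteq> a - 1" using cx a(4) by auto
      ultimately have "(x + 1) div 2 + 2 \<le> a" using a(1) by linarith
      moreover have "a \<le> (y + 1) div 2" using y by (auto simp: Dset_def)
      ultimately show ?thesis by (cases x rule: half_cases; cases y rule: half_cases) simp_all
    qed
    have "Ipol (Dset n (length \<alpha>) R) = Ipol (Dset n (length \<alpha>) R') * Ipol (Dset n (length \<alpha>) {a..m})"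
      unfolding RU Dset_Un by (rule Ipol_Un[OF finite_Dset finite_Dset gap])
    also have "Ipol (Dset n (length \<alpha>) {a..m}) = fibpoly (\<Sum>p\<in>{a..m}. cwt n \<alpha> p)"
      using Ipol_convex[OF finite_Dset, of n "length \<alpha>" "{a..m}"] Dset_convex
        card_Dset_interval[OF a(1) mn l1 ln] by metis
    finally show ?thesis
      using IH a(5,6) finite_blocks[of R'] less.prems(1) unfolding R'_def m_def
      by (simp add: mult.commute)
  qed
qed

lemma alt_sum_Pow:
  assumes "finite X"
  shows "(\<Sum>S\<in>Pow X. (-1::int) ^ card S) = (if X = {} then 1 else 0)"
proof (cases "X = {}")
  case True then show ?thesis by simp
next
  case False
  then have "{} \<subset> X" by auto
  from card_subsupersets_even_odd[OF assms this]
  have "card {x. x \<in> Pow X \<and> even (card x)} = card {x. x \<in> Pow X \<and> odd (card x)}"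
    by (simp add: Pow_def)
  from sum_alternating_cancels[OF _ this] assms False show ?thesis by simp
qed

definition pbij :: "('a \<times> 'a) set \<Rightarrow> bool" where
  "pbij T \<longleftrightarrow> (\<forall>p\<in>T. \<forall>q\<in>T. (fst p = fst q) = (snd p = snd q))"

lemma permutes_minus:
  assumes "p permutes A" "\<And>x. x \<in> B \<Longrightarrow> p x = x"
  shows "p permutes (A - B)"
  using assms unfolding permutes_def by blast

lemma exists_ext:
  assumes fin: "finite A" and sub: "T \<subseteq> A \<times> A" and pb: "pbij T"
  shows "\<exists>\<pi>0. \<pi>0 permutes A \<and> (\<forall>p\<in>T. \<pi>0 (fst p) = snd p)"
proof -
  define f where "f x = (THE b. (x, b) \<in> T)" for x
  have fT: "f x = b" if "(x, b) \<in> T" for x b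
    unfolding f_def
  proof (rule the_equality)
    show "(x, b) \<in> T" by fact
    fix c assume "(x, c) \<in> T"
    then show "c = b" using pb that unfolding pbij_def by (metis fst_conv snd_conv)
  qed
  have finT: "finite T" using fin sub by (meson finite_SigmaI finite_subset)
  have injf: "inj_on fst T" "inj_on snd T" using pb by (auto simp: pbij_def inj_on_def prod_eq_iff)
  have bf: "bij_betw f (fst ` T) (snd ` T)"
  proof (rule bij_betw_imageI)
    show "inj_on f (fst ` T)"
      by (rule inj_onI) (use pb fT in \<open>force simp: pbij_def\<close>)
    show "f ` fst ` T = snd ` T" using fT by force
  qed
  have cc: "card (A - fst ` T) = card (A - snd ` T)"
    using sub fin finT injf by (subst card_Diff_subset, force, force)+ (simp add: card_image)
  obtain g where bg: "bij_betw g (A - fst ` T) (A - snd ` T)"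
    using finite_same_card_bij[OF _ _ cc] fin by auto
  define \<pi>0 where "\<pi>0 x = (if x \<in> fst ` T then f x else if x \<in> A - fst ` T then g x else x)" for x
  have "bij_betw (\<lambda>x. if x \<in> fst ` T then f x else g x) (fst ` T \<union> (A - fst ` T)) (snd ` T \<union> (A - snd ` T))"
    by (rule bij_betw_disjoint_Un[OF bf bg]) auto
  moreover have "fst ` T \<union> (A - fst ` T) = A" "snd ` T \<union> (A - snd ` T) = A" using sub by auto
  ultimately have "bij_betw (\<lambda>x. if x \<in> fst ` T then f x else g x) A A" by simp
  then have "bij_betw \<pi>0 A A"
    by (rule bij_betw_cong[THEN iffD1, rotated]) (auto simp: \<pi>0_def)
  then have "\<pi>0 permutes A" by (rule bij_imp_permutes) (auto simp: \<pi>0_def dest: subsetD[OF sub])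
  moreover have "\<forall>p\<in>T. \<pi>0 (fst p) = snd p" using fT by (auto simp: \<pi>0_def)
  ultimately show ?thesis by blast
qed

lemma count_ext:
  assumes fin: "finite A" and sub: "T \<subseteq> A \<times> A" and pb: "pbij T"
  shows "card {\<pi>. \<pi> permutes A \<and> (\<forall>p\<in>T. \<pi> (fst p) = snd p)} = fact (card A - card T)"
proof -
  obtain \<pi>0 where p0: "\<pi>0 permutes A" "\<forall>p\<in>T. \<pi>0 (fst p) = snd p"
    using exists_ext[OF assms] by blast
  let ?E = "{\<pi>. \<pi> permutes A \<and> (\<forall>p\<in>T. \<pi> (fst p) = snd p)}"
  let ?P = "{p. p permutes (A - fst ` T)}"
  have finT: "finite T" using fin sub by (meson finite_SigmaI finite_subset)
  have injf: "inj_on fst T" using pb by (auto simp: pbij_def inj_on_def prod_eq_iff)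
  have inv0: "inv \<pi>0 \<circ> \<pi>0 = id" "\<pi>0 \<circ> inv \<pi>0 = id" using permutes_inv_o[OF p0(1)] by auto
  have invp: "inv \<pi>0 permutes A" using permutes_inv[OF p0(1)] .
  have "bij_betw (\<lambda>\<pi>. inv \<pi>0 \<circ> \<pi>) ?E ?P"
  proof (rule bij_betw_byWitness[where f' = "\<lambda>p. \<pi>0 \<circ> p"])
    show "\<forall>a\<in>?E. \<pi>0 \<circ> (inv \<pi>0 \<circ> a) = a" using inv0 by (simp add: comp_assoc[symmetric])
    show "\<forall>a\<in>?P. inv \<pi>0 \<circ> (\<pi>0 \<circ> a) = a" using inv0 by (simp add: comp_assoc[symmetric])
    show "(\<lambda>\<pi>. inv \<pi>0 \<circ> \<pi>) ` ?E \<subseteq> ?P"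
    proof clarify
      fix \<pi> assume a: "\<pi> permutes A" "\<forall>p\<in>T. \<pi> (fst p) = snd p"
      show "(inv \<pi>0 \<circ> \<pi>) permutes (A - fst ` T)"
      proof (rule permutes_minus[OF permutes_compose[OF a(1) invp]])
        fix x assume "x \<in> fst ` T"
        then obtain b where xb: "(x, b) \<in> T" by auto
        then have "\<pi> x = \<pi>0 x" using a p0 by force
        then show "(inv \<pi>0 \<circ> \<pi>) x = x" using permutes_inverses(2)[OF p0(1)] by simp
      qed
    qed
    show "(\<lambda>p. \<pi>0 \<circ> p) ` ?P \<subseteq> ?E"
    proof clarify
      fix q assume q: "q permutes (A - fst ` T)"
      have qA: "q permutes A" using q by (rule permutes_subset) auto
      show "(\<pi>0 \<circ> q) permutes A \<and> (\<forall>p\<in>T. (\<pi>0 \<circ> q) (fst p) = snd p)"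
      proof
        show "(\<pi>0 \<circ> q) permutes A" by (rule permutes_compose[OF qA p0(1)])
        show "\<forall>p\<in>T. (\<pi>0 \<circ> q) (fst p) = snd p"
          using p0(2) permutes_not_in[OF q] by auto
      qed
    qed
  qed
  then have "card ?E = card ?P" by (rule bij_betw_same_card)
  also have "\<dots> = fact (card (A - fst ` T))"
    using fin by (intro card_permutations) auto
  also have "card (A - fst ` T) = card A - card T"
    using sub fin injf finT by (subst card_Diff_subset) (auto simp: card_image)
  finally show ?thesis .
qed

definition NAc :: "('a \<times> 'a) set \<Rightarrow> ('a \<times> 'a) set set" where
  "NAc F = {S. S \<subseteq> F \<and> pbij S}"

lemma rook_IE:
  assumes fin: "finite A" and P0: "P0 \<subseteq> A \<times> A" "pbij P0"
    and F: "F \<subseteq> (A - fst ` P0) \<times> (A - snd ` P0)"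
  shows "int (card {\<pi>. \<pi> permutes A \<and> (\<forall>p\<in>P0. \<pi> (fst p) = snd p) \<and> (\<forall>p\<in>F. \<pi> (fst p) \<noteq> snd p)})
    = (\<Sum>S\<in>NAc F. (-1) ^ card S * fact (card A - card P0 - card S))"
proof -
  let ?E = "{\<pi>. \<pi> permutes A \<and> (\<forall>p\<in>P0. \<pi> (fst p) = snd p)}"
  define hit where "hit \<pi> = {p\<in>F. \<pi> (fst p) = snd p}" for \<pi>
  have finE: "finite ?E" using finite_permutations[OF fin] by (rule finite_subset[rotated]) auto
  have finF: "finite F" using F fin by (meson finite_SigmaI finite_subset finite_Diff)
  have finP0: "finite P0" using P0 fin by (meson finite_SigmaI finite_subset)
  have "{\<pi>. \<pi> permutes A \<and> (\<forall>p\<in>P0. \<pi> (fst p) = snd p) \<and> (\<forall>p\<in>F. \<pi> (fst p) \<noteq> snd p)}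
      = {\<pi>\<in>?E. hit \<pi> = {}}" by (auto simp: hit_def)
  then have "int (card {\<pi>. \<pi> permutes A \<and> (\<forall>p\<in>P0. \<pi> (fst p) = snd p) \<and> (\<forall>p\<in>F. \<pi> (fst p) \<noteq> snd p)})
      = (\<Sum>\<pi>\<in>?E. if hit \<pi> = {} then 1 else 0)"
    using finE by (simp add: sum.If_cases Int_def)
  also have "\<dots> = (\<Sum>\<pi>\<in>?E. \<Sum>S\<in>Pow (hit \<pi>). (-1::int) ^ card S)"
    by (rule sum.cong[OF refl]) (simp add: alt_sum_Pow hit_def finF)
  also have "\<dots> = (\<Sum>\<pi>\<in>?E. \<Sum>S\<in>Pow F. if S \<subseteq> hit \<pi> then (-1::int) ^ card S else 0)"
  proof (rule sum.cong[OF refl])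
    fix \<pi> have "Pow (hit \<pi>) = {S \<in> Pow F. S \<subseteq> hit \<pi>}" by (auto simp: hit_def)
    then show "(\<Sum>S\<in>Pow (hit \<pi>). (-1::int) ^ card S) = (\<Sum>S\<in>Pow F. if S \<subseteq> hit \<pi> then (-1) ^ card S else 0)"
      using finF by (simp add: sum.If_cases Int_def)
  qed
  also have "\<dots> = (\<Sum>S\<in>Pow F. \<Sum>\<pi>\<in>?E. if S \<subseteq> hit \<pi> then (-1::int) ^ card S else 0)"
    by (rule sum.swap)
  also have "\<dots> = (\<Sum>S\<in>Pow F. (-1) ^ card S * int (card {\<pi>. \<pi> permutes A \<and> (\<forall>p\<in>P0 \<union> S. \<pi> (fst p) = snd p)}))"
  proof (rule sum.cong[OF refl])
    fix S assume S: "S \<in> Pow F"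
    have "{\<pi>\<in>?E. S \<subseteq> hit \<pi>} = {\<pi>. \<pi> permutes A \<and> (\<forall>p\<in>P0 \<union> S. \<pi> (fst p) = snd p)}"
      using S by (auto simp: hit_def)
    then show "(\<Sum>\<pi>\<in>?E. if S \<subseteq> hit \<pi> then (-1::int) ^ card S else 0)
        = (-1) ^ card S * int (card {\<pi>. \<pi> permutes A \<and> (\<forall>p\<in>P0 \<union> S. \<pi> (fst p) = snd p)})"
      using finE by (simp add: sum.If_cases Int_def)
  qed
  also have "\<dots> = (\<Sum>S\<in>NAc F. (-1) ^ card S * int (card {\<pi>. \<pi> permutes A \<and> (\<forall>p\<in>P0 \<union> S. \<pi> (fst p) = snd p)}))"
  proof (rule sum.mono_neutral_right)
    show "finite (Pow F)" using finF by simp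
    show "NAc F \<subseteq> Pow F" by (auto simp: NAc_def)
    show "\<forall>S\<in>Pow F - NAc F. (-1) ^ card S * int (card {\<pi>. \<pi> permutes A \<and> (\<forall>p\<in>P0 \<union> S. \<pi> (fst p) = snd p)}) = 0"
    proof
      fix S assume S: "S \<in> Pow F - NAc F"
      have "{\<pi>. \<pi> permutes A \<and> (\<forall>p\<in>P0 \<union> S. \<pi> (fst p) = snd p)} = {}"
      proof (rule ccontr)
        assume "{\<pi>. \<pi> permutes A \<and> (\<forall>p\<in>P0 \<union> S. \<pi> (fst p) = snd p)} \<noteq> {}"
        then obtain \<pi> where \<pi>: "\<pi> permutes A" "\<forall>p\<in>S. \<pi> (fst p) = snd p" by auto
        have "pbij S" unfolding pbij_def
        proof (intro ballI)
          fix p q assume "p \<in> S" "q \<in> S"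
          then show "(fst p = fst q) = (snd p = snd q)"
            using \<pi> permutes_inj[OF \<pi>(1)] by (metis injD)
        qed
        then show False using S by (auto simp: NAc_def)
      qed
      then show "(-1) ^ card S * int (card {\<pi>. \<pi> permutes A \<and> (\<forall>p\<in>P0 \<union> S. \<pi> (fst p) = snd p)}) = 0"
        by (simp only: card.empty of_nat_0 mult_zero_right)
    qed
  qed
  also have "\<dots> = (\<Sum>S\<in>NAc F. (-1) ^ card S * fact (card A - card P0 - card S))"
  proof (rule sum.cong[OF refl])
    fix S assume S: "S \<in> NAc F"
    have SF: "S \<subseteq> F" "pbij S" using S by (auto simp: NAc_def)
    have finS: "finite S" using finF SF by (auto intro: finite_subset)
    have disj: "P0 \<inter> S = {}" using SF F by force
    have sub: "P0 \<union> S \<subseteq> A \<times> A" using SF F P0 by auto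
    have pb: "pbij (P0 \<union> S)"
      unfolding pbij_def
    proof (intro ballI)
      fix p q assume pq: "p \<in> P0 \<union> S" "q \<in> P0 \<union> S"
      consider "p \<in> P0" "q \<in> P0" | "p \<in> S" "q \<in> S" | "p \<in> P0" "q \<in> S" | "p \<in> S" "q \<in> P0"
        using pq by blast
      then show "(fst p = fst q) = (snd p = snd q)"
      proof cases
        case 1 then show ?thesis using P0(2) by (auto simp: pbij_def)
      next
        case 2 then show ?thesis using SF(2) by (auto simp: pbij_def)
      next
        case 3
        then have "q \<in> (A - fst ` P0) \<times> (A - snd ` P0)" using SF F by blast
        then have "fst q \<notin> fst ` P0" "snd q \<notin> snd ` P0" by (auto simp: mem_Times_iff)
        then show ?thesis using 3 by (metis imageI)
      next
        case 4
        then have "p \<in> (A - fst ` P0) \<times> (A - snd ` P0)" using SF F by blast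
        then have "fst p \<notin> fst ` P0" "snd p \<notin> snd ` P0" by (auto simp: mem_Times_iff)
        then show ?thesis using 4 by (metis imageI)
      qed
    qed
    have "card {\<pi>. \<pi> permutes A \<and> (\<forall>p\<in>P0 \<union> S. \<pi> (fst p) = snd p)} = fact (card A - card (P0 \<union> S))"
      by (rule count_ext[OF fin sub pb])
    also have "card (P0 \<union> S) = card P0 + card S" using finS finP0 disj by (simp add: card_Un_disjoint)
    finally show "(-1) ^ card S * int (card {\<pi>. \<pi> permutes A \<and> (\<forall>p\<in>P0 \<union> S. \<pi> (fst p) = snd p)})
        = (-1) ^ card S * fact (card A - card P0 - card S)"
      by (simp add: diff_diff_add of_nat_fact)
  qed
  finally show ?thesis .
qed

definition cell :: "nat \<Rightarrow> nat \<times> nat" where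
  "cell t = (Suc (t div 2), (t + 1) div 2)"

lemma cell_arith:
  "((t::nat) div 2 = t' div 2) = ((t + 1) div 2 = (t' + 1) div 2) \<longleftrightarrow> (t = t' \<or> (t' \<noteq> Suc t \<and> t \<noteq> Suc t'))"
  by (cases t rule: half_cases; cases t' rule: half_cases; simp; presburger)

lemma half_sum: "(t::nat) = t div 2 + (t + 1) div 2"
  by (cases t rule: half_cases) simp_all

lemma inj_cell: "inj cell"
proof (rule injI)
  fix x y assume "cell x = cell y"
  then have "x div 2 = y div 2" "(x + 1) div 2 = (y + 1) div 2" by (auto simp: cell_def)
  then have "x div 2 + (x + 1) div 2 = y div 2 + (y + 1) div 2" by simp
  then show "x = y" using half_sum[of x] half_sum[of y] by linarith
qed

lemma pbij_cell_iff: "pbij (cell ` T) \<longleftrightarrow> (\<forall>x\<in>T. Suc x \<notin> T)"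
proof
  assume a: "pbij (cell ` T)"
  show "\<forall>x\<in>T. Suc x \<notin> T"
  proof (intro ballI notI)
    fix x assume "x \<in> T" "Suc x \<in> T"
    then have "(fst (cell x) = fst (cell (Suc x))) = (snd (cell x) = snd (cell (Suc x)))"
      using a unfolding pbij_def by blast
    then show False using cell_arith[of x "Suc x"] by (simp add: cell_def)
  qed
next
  assume a: "\<forall>x\<in>T. Suc x \<notin> T"
  show "pbij (cell ` T)"
    unfolding pbij_def
  proof (intro ballI)
    fix p q assume "p \<in> cell ` T" "q \<in> cell ` T"
    then obtain t t' where tt: "t \<in> T" "t' \<in> T" "p = cell t" "q = cell t'" by auto
    then have "t = t' \<or> (t' \<noteq> Suc t \<and> t \<noteq> Suc t')" using a by auto
    then show "(fst p = fst q) = (snd p = snd q)"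
      using cell_arith[of t t'] tt by (auto simp: cell_def)
  qed
qed

lemma mod_lemma:
  assumes "3 \<le> n" "2 \<le> i" "i \<le> n" "1 \<le> j" "j \<le> (n::nat)" "(j + 1) mod n = i mod n"
  shows "j + 1 = i"
proof (cases "i = n")
  case True
  then have "(j + 1) mod n = 0" using assms by simp
  consider "j + 1 < n" | "j + 1 = n" | "j + 1 = n + 1" using assms by linarith
  then show ?thesis
  proof cases
    case 1 then show ?thesis using \<open>(j + 1) mod n = 0\<close> by simp
  next
    case 2 then show ?thesis using True by simp
  next
    case 3 then have "(j + 1) mod n = (1 + n) mod n" by simp
    also have "\<dots> = 1" using assms by (simp add: mod_Suc)
    finally have "(j + 1) mod n = 1" .
    then show ?thesis using \<open>(j + 1) mod n = 0\<close> by simp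
  qed
next
  case False
  then have im: "i mod n = i" using assms by simp
  show ?thesis
  proof (cases "j + 1 = n + 1")
    case True
    then have "(j + 1) mod n = 1" using assms by (simp add: mod_Suc)
    then show ?thesis using im assms by simp
  next
    case False
    then have "j + 1 < n \<or> j + 1 = n" using assms by linarith
    then show ?thesis using im assms by auto
  qed
qed


theorem mainTheorem10:
  fixes n :: nat and \<alpha> :: "nat list"
  assumes "n \<ge> 3" and "\<alpha> \<noteq> []" and "length \<alpha> < n" and "valid_prefix n \<alpha>"
  shows "int (card {\<pi>. menage n \<pi> \<and> begins_with \<pi> \<alpha>}) =
    (\<Sum>k=0..n - length \<alpha>. (-1) ^ k * coeff (rook_poly n \<alpha>) k * fact (n - length \<alpha> - k))"
proof -
  define l where "l = length \<alpha>"
  define N where "N = n - l"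
  have n3: "3 \<le> n" and ln: "l < n" using assms by (auto simp: l_def)
  have l1: "1 \<le> l" using assms(2) unfolding l_def by (cases \<alpha>) auto
  obtain \<pi>0 where p0: "menage n \<pi>0" "begins_with \<pi>0 \<alpha>"
    using assms(4) unfolding valid_prefix_def by blast
  have p0perm: "\<pi>0 permutes {1..n}" using p0 by (simp add: menage_def)
  have p0a: "\<And>k. k \<in> {1..l} \<Longrightarrow> \<alpha> ! (k - 1) = \<pi>0 k" using p0(2) by (simp add: begins_with_def l_def)
  define A where "A = {1..n::nat}"
  define P0 where "P0 = (\<lambda>k. (k, \<alpha> ! (k - 1))) ` {1..l}"
  define R where "R = remaining n \<alpha>"
  define D where "D = Dset n l R"
  define Fb where "Fb = cell ` D"
  have setal: "set \<alpha> = \<pi>0 ` {1..l}"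
  proof
    show "set \<alpha> \<subseteq> \<pi>0 ` {1..l}"
    proof
      fix x assume "x \<in> set \<alpha>"
      then obtain i where i: "i < l" "\<alpha> ! i = x" by (auto simp: in_set_conv_nth l_def)
      then have "x = \<pi>0 (Suc i)" using p0a[of "Suc i"] by auto
      then show "x \<in> \<pi>0 ` {1..l}" using i by auto
    qed
    show "\<pi>0 ` {1..l} \<subseteq> set \<alpha>"
    proof
      fix x assume "x \<in> \<pi>0 ` {1..l}"
      then obtain k where k: "k \<in> {1..l}" "x = \<pi>0 k" by auto
      then have "x = \<alpha> ! (k - 1)" using p0a by auto
      then show "x \<in> set \<alpha>" using k by (auto simp: l_def)
    qed
  qed
  have fstP0: "fst ` P0 = {1..l}" unfolding P0_def by (auto simp: image_image)
  have sndP0: "snd ` P0 = set \<alpha>" unfolding P0_def setal using p0a by (force simp: image_image)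
  have P0sub: "P0 \<subseteq> A \<times> A"
    unfolding P0_def A_def using p0a permutes_in_image[OF p0perm] ln by auto
  have injp0: "inj \<pi>0" using permutes_inj[OF p0perm] .
  have pbP0: "pbij P0" unfolding pbij_def P0_def
    using p0a injp0 by (auto dest: injD)
  have cardP0: "card P0 = l" unfolding P0_def
    by (subst card_image) (auto intro: inj_onI)
  have RA: "R = A - snd ` P0" by (simp add: R_def remaining_def A_def sndP0)
  have FbSub: "Fb \<subseteq> (A - fst ` P0) \<times> (A - snd ` P0)"
    unfolding Fb_def D_def fstP0 RA[symmetric]
    by (auto simp: Dset_def cell_def A_def R_def remaining_def)
  have finA: "finite A" by (simp add: A_def)
  have cardA: "card A = n" by (simp add: A_def)
  have Meq: "{\<pi>. menage n \<pi> \<and> begins_with \<pi> \<alpha>} =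
     {\<pi>. \<pi> permutes A \<and> (\<forall>p\<in>P0. \<pi> (fst p) = snd p) \<and> (\<forall>p\<in>Fb. \<pi> (fst p) \<noteq> snd p)}"
    (is "?L = ?R")
  proof (intro Collect_cong)
    fix \<pi>
    have bw: "begins_with \<pi> \<alpha> \<longleftrightarrow> (\<forall>p\<in>P0. \<pi> (fst p) = snd p)"
      by (auto simp: begins_with_def P0_def l_def)
    show "(menage n \<pi> \<and> begins_with \<pi> \<alpha>) \<longleftrightarrow>
      (\<pi> permutes A \<and> (\<forall>p\<in>P0. \<pi> (fst p) = snd p) \<and> (\<forall>p\<in>Fb. \<pi> (fst p) \<noteq> snd p))"
    proof (cases "\<pi> permutes A \<and> begins_with \<pi> \<alpha>")
      case False
      then show ?thesis using bw by (auto simp: menage_def A_def)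
    next
      case True
      then have perm: "\<pi> permutes A" and bg: "begins_with \<pi> \<alpha>" by auto
      have piA: "\<And>i. i \<in> A \<Longrightarrow> \<pi> i \<in> A" using permutes_in_image[OF perm] by auto
      have injp: "inj \<pi>" using permutes_inj[OF perm] .
      have pil: "\<And>k. k \<in> {1..l} \<Longrightarrow> \<pi> k = \<pi>0 k" using bg p0a by (auto simp: begins_with_def l_def)
      have piR: "\<pi> i \<in> R" if i: "i \<in> {Suc l..n}" for i
      proof -
        have "\<pi> i \<in> A" using i piA by (auto simp: A_def)
        moreover have "\<pi> i \<notin> set \<alpha>"
        proof
          assume "\<pi> i \<in> set \<alpha>"
          then obtain k where k: "k \<in> {1..l}" "\<pi> i = \<pi>0 k" using setal by auto
          then have "\<pi> i = \<pi> k" using pil by auto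
          then have "i = k" using injp by (auto dest: injD)
          then show False using i k by auto
        qed
        ultimately show ?thesis by (simp add: R_def remaining_def A_def)
      qed
      have "menage n \<pi> \<longleftrightarrow> (\<forall>p\<in>Fb. \<pi> (fst p) \<noteq> snd p)"
      proof
        assume m: "menage n \<pi>"
        show "\<forall>p\<in>Fb. \<pi> (fst p) \<noteq> snd p"
        proof
          fix p assume "p \<in> Fb"
          then obtain t where t: "t \<in> D" "p = cell t" unfolding Fb_def by auto
          define i where "i = Suc (t div 2)"
          define j where "j = (t + 1) div 2"
          have iA: "i \<in> {1..n}" using t by (auto simp: D_def Dset_def i_def)
          have ij: "j = i \<or> j + 1 = i" unfolding i_def j_def by (cases t rule: half_cases) simp_all
          have "\<pi> i \<noteq> i \<and> (\<pi> i + 1) mod n \<noteq> i mod n" using m iA by (auto simp: menage_def)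
          then have "\<pi> i \<noteq> j" using ij by auto
          then show "\<pi> (fst p) \<noteq> snd p" using t by (simp add: cell_def i_def j_def)
        qed
      next
        assume nf: "\<forall>p\<in>Fb. \<pi> (fst p) \<noteq> snd p"
        have "\<forall>i\<in>{1..n}. \<pi> i \<noteq> i \<and> (\<pi> i + 1) mod n \<noteq> i mod n"
        proof
          fix i assume iA: "i \<in> {1..n}"
          show "\<pi> i \<noteq> i \<and> (\<pi> i + 1) mod n \<noteq> i mod n"
          proof (cases "i \<le> l")
            case True
            then have "\<pi> i = \<pi>0 i" using pil iA by auto
            then show ?thesis using p0(1) iA by (auto simp: menage_def)
          next
            case False
            then have iS: "i \<in> {Suc l..n}" using iA by auto
            have jR: "\<pi> i \<in> R" using piR[OF iS] .
            have jA: "\<pi> i \<in> {1..n}" using jR by (auto simp: R_def remaining_def)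
            have c1: "\<pi> i \<noteq> i"
            proof
              assume eq: "\<pi> i = i"
              obtain k where ik: "i = Suc k" using iA by (cases i) auto
              have "2 * i - 1 = 2 * k + 1" using ik by simp
              then have "2 * i - 1 \<in> D" using iS jR eq ik by (auto simp: D_def Dset_def)
              moreover have "cell (2 * i - 1) = (i, i)" using ik by (simp add: cell_def)
              ultimately have "(i, i) \<in> Fb" unfolding Fb_def by (metis imageI)
              then show False using nf eq by auto
            qed
            have c2: "(\<pi> i + 1) mod n \<noteq> i mod n"
            proof
              assume eq: "(\<pi> i + 1) mod n = i mod n"
              have "\<pi> i + 1 = i" using mod_lemma[OF n3 _ _ _ _ eq] iS jA l1 by auto
              then have "2 * \<pi> i \<in> D" using iS jR jA by (auto simp: D_def Dset_def)
              moreover have "cell (2 * \<pi> i) = (i, \<pi> i)" using \<open>\<pi> i + 1 = i\<close> by (simp add: cell_def)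
              ultimately have "(i, \<pi> i) \<in> Fb" unfolding Fb_def by (metis imageI)
              then show False using nf by auto
            qed
            show ?thesis using c1 c2 by blast
          qed
        qed
        then show "menage n \<pi>" using perm by (simp add: menage_def A_def)
      qed
      then show ?thesis using True bw by auto
    qed
  qed
  have LHS: "int (card {\<pi>. menage n \<pi> \<and> begins_with \<pi> \<alpha>}) =
      (\<Sum>S\<in>NAc Fb. (-1) ^ card S * fact (N - card S))"
    unfolding Meq using rook_IE[OF finA P0sub pbP0 FbSub] by (simp add: cardA cardP0 N_def)
  have NAeq: "NAc Fb = (\<lambda>T. cell ` T) ` NAi D"
  proof (intro equalityI subsetI)
    fix S assume "S \<in> NAc Fb"
    then have S: "S \<subseteq> cell ` D" "pbij S" by (auto simp: NAc_def Fb_def)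
    then obtain T where T: "T \<subseteq> D" "S = cell ` T" by (auto simp: subset_image_iff)
    then have "T \<in> NAi D" using S pbij_cell_iff[of T] by (auto simp: NAi_def)
    then show "S \<in> (\<lambda>T. cell ` T) ` NAi D" using T by auto
  next
    fix S assume "S \<in> (\<lambda>T. cell ` T) ` NAi D"
    then obtain T where T: "T \<in> NAi D" "S = cell ` T" by auto
    then show "S \<in> NAc Fb" using pbij_cell_iff[of T] by (auto simp: NAc_def NAi_def Fb_def)
  qed
  have injI': "inj_on (\<lambda>T. cell ` T) (NAi D)"
    by (rule inj_onI) (simp add: inj_image_eq_iff[OF inj_cell])
  have cardc: "card (cell ` T) = card T" for T
    by (rule card_image) (rule inj_on_subset[OF inj_cell], simp)
  have LHS2: "int (card {\<pi>. menage n \<pi> \<and> begins_with \<pi> \<alpha>}) =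
      (\<Sum>T\<in>NAi D. (-1) ^ card T * fact (N - card T))"
    unfolding LHS NAeq by (subst sum.reindex[OF injI']) (simp add: o_def cardc)
  have bound: "card T \<le> N" if T: "T \<in> NAi D" for T
  proof -
    have pb: "pbij (cell ` T)" using T pbij_cell_iff[of T] by (auto simp: NAi_def)
    have "inj_on fst (cell ` T)" using pb by (auto simp: pbij_def inj_on_def prod_eq_iff)
    then have "card T = card (fst ` cell ` T)" by (simp add: card_image cardc)
    also have "\<dots> \<le> card {Suc l..n}"
      by (rule card_mono) (use T in \<open>auto simp: NAi_def D_def Dset_def cell_def\<close>)
    finally show ?thesis by (simp add: N_def)
  qed
  have finR: "finite R" "R \<subseteq> {1..n}" by (auto simp: R_def remaining_def)
  have RP: "rook_poly n \<alpha> = Ipol D"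
    unfolding rook_poly_def D_def l_def R_def[symmetric]
    using Ipol_Dset[of \<alpha> n R] l1 ln finR by (simp add: l_def)
  have co: "coeff (rook_poly n \<alpha>) k = (\<Sum>T\<in>NAi D. if card T = k then 1 else 0)" for k
    unfolding RP Ipol_def by (simp add: coeff_sum coeff_monom)
  have finNA: "finite (NAi D)" by (rule finite_NAi) (simp add: D_def finite_Dset)
  have "(\<Sum>k=0..n - length \<alpha>. (-1) ^ k * coeff (rook_poly n \<alpha>) k * fact (n - length \<alpha> - k))
      = (\<Sum>k=0..N. \<Sum>T\<in>NAi D. if card T = k then (-1) ^ k * fact (N - k) else (0::int))"
    unfolding co N_def l_def
  proof (rule sum.cong[OF refl])
    fix k
    show "(-1) ^ k * (\<Sum>T\<in>NAi D. if card T = k then 1 else 0) * fact (n - length \<alpha> - k)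
      = (\<Sum>T\<in>NAi D. if card T = k then (-1) ^ k * fact (n - length \<alpha> - k) else (0::int))"
      unfolding sum_distrib_left sum_distrib_right by (rule sum.cong) simp_all
  qed
  also have "\<dots> = (\<Sum>T\<in>NAi D. \<Sum>k=0..N. if card T = k then (-1) ^ k * fact (N - k) else (0::int))"
    by (rule sum.swap)
  also have "\<dots> = (\<Sum>T\<in>NAi D. (-1) ^ card T * fact (N - card T))"
    by (rule sum.cong[OF refl]) (use bound in \<open>simp add: sum.delta'\<close>)
  finally show ?thesis using LHS2 by simp
qed

end
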